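(* Let $N(u)=\sum_{\lambda,m}c(\lambda,m)u^{\lambda}(\log u)^m$ be a finite sum with $\lambda\in\mathbb C$, $m\in\mathbb Z_{\ge0}$ and $c(\lambda,m)\in\mathbb Z$. Then: (a) $\zeta_N(s)$ has an analytic continuation with isolated singularities to all $s\in\mathbb C$; (b) $\zeta_{N^*}(-s)=\zeta_N(s)\,(-1)^{N(1)}$ and $\varepsilon_N(s)=(-1)^{N(1)}$.
   Context: For measurable $N:(1,\infty)\to\mathbb C$ let $Z_N(w,s)=\frac1{\Gamma(w)}\int_1^\infty\frac{N(u)}{u^{s+1}}(\log u)^{w-1}du$ (convergent for $\operatorname{Re}(s)$ large and $w$ in an open domain, extended holomorphically to $w=0$), and $\zeta_N(s)=\exp\big(\frac{\partial}{\partial w}Z_N(w,s)\big|_{w=0}\big)$. For $N$ defined on $(0,\infty)$, $N^*(u)=N(1/u)$, and $\varepsilon_N(s)=\zeta_{N^*}(-s)/\zeta_N(s)$. *)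

theory Defs
  imports "HOL-Analysis.Analysis" "HOL-Complex_Analysis.Complex_Analysis"
begin

definition Z_integrand :: "(real \<Rightarrow> complex) \<Rightarrow> complex \<Rightarrow> complex \<Rightarrow> real \<Rightarrow> complex" where
  "Z_integrand N w s u =
     N u / (complex_of_real u) powr (s + 1) * (complex_of_real (ln u)) powr (w - 1)"

definition Z_conv :: "(real \<Rightarrow> complex) \<Rightarrow> complex \<Rightarrow> complex \<Rightarrow> bool" where
  "Z_conv N w s \<longleftrightarrow> set_integrable lborel {1<..} (Z_integrand N w s)"

text \<open>Z_N(w,s) = 1/Gamma(w) * integral, where 1/Gamma is the entire function rGamma.\<close>
definition Z_int :: "(real \<Rightarrow> complex) \<Rightarrow> complex \<Rightarrow> complex \<Rightarrow> complex" where
  "Z_int N w s = rGamma w * (LINT u:{1<..}|lborel. Z_integrand N w s u)"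

text \<open>F is a holomorphic extension (in w, for fixed s) of Z_N(.,s) to a connected open
  domain U containing w = 0: F agrees with the convergent integral on a nonempty open set.\<close>
definition Z_ext :: "(real \<Rightarrow> complex) \<Rightarrow> complex \<Rightarrow> (complex \<Rightarrow> complex) \<Rightarrow> complex set \<Rightarrow> bool" where
  "Z_ext N s F U \<longleftrightarrow> open U \<and> connected U \<and> 0 \<in> U \<and> F holomorphic_on U \<and>
     (\<exists>V. open V \<and> V \<noteq> {} \<and> V \<subseteq> U \<and> (\<forall>w\<in>V. Z_conv N w s \<and> F w = Z_int N w s))"

definition zetaN :: "(real \<Rightarrow> complex) \<Rightarrow> complex \<Rightarrow> complex" where
  "zetaN N s = exp (THE d. \<exists>F U. Z_ext N s F U \<and> deriv F 0 = d)"

definition Nstar :: "(real \<Rightarrow> complex) \<Rightarrow> real \<Rightarrow> complex" where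
  "Nstar N u = N (1 / u)"

text \<open>g is an analytic continuation of f (given on some right half-plane) to all of C
  with isolated singularities: g is holomorphic off a set S without limit points, and
  agrees with f on a half-plane Re s > sigma.\<close>
definition continuation_isolated :: "(complex \<Rightarrow> complex) \<Rightarrow> complex set \<Rightarrow> (complex \<Rightarrow> complex) \<Rightarrow> bool" where
  "continuation_isolated f S g \<longleftrightarrow>
     (\<forall>z. \<not> z islimpt S) \<and> g holomorphic_on (- S) \<and>
     (\<exists>\<sigma>::real. \<forall>s. \<sigma> < Re s \<longrightarrow> g s = f s)"

end

theory Submission
  imports Defs
begin



lemma holo_param_integral:
  fixes f :: "complex \<Rightarrow> real \<Rightarrow> complex" and B :: "real set"
    and R :: "complex set"
  assumes R: "open R"
  and B[measurable]: "B \<in> sets lborel"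
  and hol: "\<And>t. t \<in> B \<Longrightarrow> (\<lambda>w. f w t) holomorphic_on R"
  and meas: "\<And>w. w \<in> R \<Longrightarrow> f w \<in> borel_measurable lborel"
  and dom: "\<And>w. w \<in> R \<Longrightarrow> \<exists>r>0. cball w r \<subseteq> R \<and> (\<exists>g. set_integrable lborel B g \<and>
                (\<forall>w'\<in>cball w r. \<forall>t\<in>B. norm (f w' t) \<le> g t))"
  shows "(\<lambda>w. LINT t:B|lborel. f w t) holomorphic_on R"
  unfolding holomorphic_on_def
proof
  fix w0 assume w0: "w0 \<in> R"
  obtain r g where r: "r > 0" "cball w0 r \<subseteq> R" and g: "set_integrable lborel B g"
     and gb: "\<And>w' t. w' \<in> cball w0 r \<Longrightarrow> t \<in> B \<Longrightarrow> norm (f w' t) \<le> g t"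
    using dom[OF w0] by blast
  define \<rho> where "\<rho> = r / 2"
  have \<rho>: "\<rho> > 0" using r by (simp add: \<rho>_def)
  define d where "d = (\<lambda>t. deriv (\<lambda>w. f w t) w0)"
  have gnn: "0 \<le> g t" if "t \<in> B" for t
    using gb[of w0 t] that r by (meson centre_in_cball less_imp_le norm_ge_zero order_trans)
  have C1: "norm (deriv (\<lambda>w. f w t) w) \<le> g t / \<rho>" if t: "t \<in> B" and w: "w \<in> cball w0 \<rho>" for t w
  proof -
    have sub: "cball w \<rho> \<subseteq> cball w0 r"
      using w by (subst cball_subset_cball_iff) (auto simp: \<rho>_def dist_commute)
    have "norm ((deriv ^^ 1) (\<lambda>w. f w t) w) \<le> fact 1 * g t / \<rho> ^ 1"
    proof (rule Cauchy_inequality)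
      show "(\<lambda>w. f w t) holomorphic_on ball w \<rho>"
        using hol[OF t] sub r(2) ball_subset_cball by (meson holomorphic_on_subset order_trans)
      show "continuous_on (cball w \<rho>) (\<lambda>w. f w t)"
        using hol[OF t] sub r(2) by (meson holomorphic_on_imp_continuous_on holomorphic_on_subset order_trans)
      show "0 < \<rho>" by fact
      fix x assume "norm (w - x) = \<rho>"
      then have "x \<in> cball w0 r" using sub by (auto simp: dist_norm)
      then show "norm (f x t) \<le> g t" using gb t by blast
    qed
    then show ?thesis by simp
  qed
  have C2: "norm (f x t - f w0 t) \<le> g t / \<rho> * norm (x - w0)" if t: "t \<in> B" and x: "x \<in> cball w0 \<rho>" for t x
  proof (rule field_differentiable_bound[where S="cball w0 \<rho>" and f'="\<lambda>w. deriv (\<lambda>w. f w t) w"])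
    show "convex (cball w0 \<rho>)" by simp
    fix z assume z: "z \<in> cball w0 \<rho>"
    have "z \<in> cball w0 r" using z r(1) by (auto simp: \<rho>_def)
    then have zR: "z \<in> R" using r(2) by blast
    show "((\<lambda>w. f w t) has_field_derivative deriv (\<lambda>w. f w t) z) (at z within cball w0 \<rho>)"
      by (rule holomorphic_derivI[OF hol[OF t] R zR])
    show "norm (deriv (\<lambda>w. f w t) z) \<le> g t / \<rho>" by (rule C1[OF t z])
  qed (use x \<rho> in auto)
  have int_w: "set_integrable lborel B (f w)" if w: "w \<in> cball w0 r" for w
  proof (rule set_integrable_bound[OF g])
    have "w \<in> R" using w r(2) by blast
    then show "set_borel_measurable lborel B (f w)"
      using meas unfolding set_borel_measurable_def by measurable
    show "AE x in lborel. x \<in> B \<longrightarrow> norm (f w x) \<le> norm (g x)"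
      using gb[OF w] gnn by (auto intro!: AE_I2)
  qed
  have "((\<lambda>w. LINT t:B|lborel. f w t) has_field_derivative (LINT t:B|lborel. d t)) (at w0)"
    unfolding has_field_derivative_iff tendsto_at_iff_sequentially
  proof (intro allI impI)
    fix X :: "nat \<Rightarrow> complex" assume X: "\<forall>i. X i \<in> UNIV - {w0}" "X \<longlonglongrightarrow> w0"
    have evX: "eventually (\<lambda>i. X i \<in> cball w0 \<rho>) sequentially"
    proof -
      have "eventually (\<lambda>i. dist (X i) w0 < \<rho>) sequentially"
        using X(2) \<rho> by (rule tendstoD)
      then show ?thesis by eventually_elim (auto simp: dist_commute)
    qed
    define s where "s = (\<lambda>i t. indicator B t *\<^sub>R (if X i \<in> cball w0 \<rho> then (f (X i) t - f w0 t) / (X i - w0) else 0))"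
    have w0c: "w0 \<in> cball w0 r" using r by simp
    have Xr: "X i \<in> cball w0 r" if "X i \<in> cball w0 \<rho>" for i
      using that r by (auto simp: \<rho>_def)
    have smeas: "s i \<in> borel_measurable lborel" for i
    proof (cases "X i \<in> cball w0 \<rho>")
      case True
      have "X i \<in> R" "w0 \<in> R" using Xr[OF True] r(2) w0 by auto
      with True show ?thesis unfolding s_def using meas by simp measurable
    qed (simp add: s_def)
    have slim: "(\<lambda>i. s i t) \<longlonglongrightarrow> indicator B t *\<^sub>R d t" for t
    proof (cases "t \<in> B")
      case True
      have "((\<lambda>w. f w t) has_field_derivative d t) (at w0)"
        unfolding d_def by (rule holomorphic_derivI[OF hol[OF True] R w0])
      then have "((\<lambda>y. (f y t - f w0 t) / (y - w0)) \<circ> X) \<longlonglongrightarrow> d t"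
        unfolding has_field_derivative_iff tendsto_at_iff_sequentially using X by blast
      then have "(\<lambda>i. (f (X i) t - f w0 t) / (X i - w0)) \<longlonglongrightarrow> d t" by (simp add: o_def)
      then show ?thesis
        using True evX by (auto simp: s_def elim!: Lim_transform_eventually intro: eventually_mono)
    qed (simp add: s_def)
    have dmeas: "(\<lambda>t. indicator B t *\<^sub>R d t) \<in> borel_measurable lborel"
      by (rule borel_measurable_LIMSEQ_metric[OF smeas slim])
    have gint: "integrable lborel (\<lambda>t. indicator B t *\<^sub>R (g t / \<rho>))"
      using g unfolding set_integrable_def by simp
    have sbound: "norm (s i t) \<le> indicator B t *\<^sub>R (g t / \<rho>)" for i t
    proof (cases "t \<in> B \<and> X i \<in> cball w0 \<rho>")
      case True
      have "X i \<noteq> w0" using X(1) by auto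
      then show ?thesis using True C2[of t "X i"] \<rho>
        by (auto simp: s_def norm_divide divide_le_eq)
    next
      case False then show ?thesis using gnn \<rho> by (auto simp: s_def indicator_def)
    qed
    have lim: "(\<lambda>i. integral\<^sup>L lborel (s i)) \<longlonglongrightarrow> integral\<^sup>L lborel (\<lambda>t. indicator B t *\<^sub>R d t)"
      by (rule integral_dominated_convergence[OF dmeas smeas gint]) (use slim sbound in \<open>auto intro!: AE_I2\<close>)
    have "eventually (\<lambda>i. integral\<^sup>L lborel (s i) =
        ((\<lambda>y. ((LINT t:B|lborel. f y t) - (LINT t:B|lborel. f w0 t)) / (y - w0)) \<circ> X) i) sequentially"
      using evX
    proof eventually_elim
      case (elim i)
      have "integral\<^sup>L lborel (s i) = (LINT t:B|lborel. (f (X i) t - f w0 t) / (X i - w0))"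
        unfolding s_def set_lebesgue_integral_def using elim by (intro Bochner_Integration.integral_cong) auto
      also have "\<dots> = (LINT t:B|lborel. f (X i) t - f w0 t) / (X i - w0)"
        by (rule set_integral_divide_zero)
      also have "\<dots> = ((LINT t:B|lborel. f (X i) t) - (LINT t:B|lborel. f w0 t)) / (X i - w0)"
        using set_integral_diff(2)[OF int_w[OF Xr[OF elim]] int_w[OF w0c]] by simp
      finally show ?case by simp
    qed
    with lim show "((\<lambda>y. ((LINT t:B|lborel. f y t) - (LINT t:B|lborel. f w0 t)) / (y - w0)) \<circ> X)
           \<longlonglongrightarrow> (LINT t:B|lborel. d t)"
      by (auto simp: set_lebesgue_integral_def elim: Lim_transform_eventually)
  qed
  then have "(\<lambda>w. LINT t:B|lborel. f w t) field_differentiable (at w0)"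
    unfolding field_differentiable_def by blast
  then show "(\<lambda>w. LINT t:B|lborel. f w t) field_differentiable (at w0 within R)"
    using field_differentiable_at_within by blast
qed


lemma abs_int_lborel:
  fixes f :: "real \<Rightarrow> 'b::euclidean_space"
  assumes "f absolutely_integrable_on S" "S \<in> sets borel" "f \<in> borel_measurable borel"
  shows "set_integrable lborel S f"
proof -
  have S[measurable]: "S \<in> sets borel" by fact
  have f[measurable]: "f \<in> borel_measurable borel" by fact
  have m: "(\<lambda>x. indicator S x *\<^sub>R f x) \<in> borel_measurable lborel" by measurable
  show ?thesis using assms(1) integrable_completion[OF m] unfolding set_integrable_def by simp
qed

lemma Gamma_real_set_integrable:
  fixes x :: real assumes "x > 0"
  shows "set_integrable lborel {0<..} (\<lambda>t. t powr (x - 1) / exp t)"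
proof -
  have "(\<lambda>t. complex_of_real t powr (of_real x - 1) / of_real (exp t)) absolutely_integrable_on {0<..}"
    using absolutely_integrable_Gamma_integral'[of "of_real x"] assms by simp
  then have "integrable lebesgue (\<lambda>t. Re (indicator {0<..} t *\<^sub>R (complex_of_real t powr (of_real x - 1) / of_real (exp t))))"
    unfolding set_integrable_def by (rule integrable_Re)
  also have "(\<lambda>t. Re (indicator {0<..} t *\<^sub>R (complex_of_real t powr (of_real x - 1) / of_real (exp t))))
     = (\<lambda>t. indicator {0<..} t *\<^sub>R (t powr (x - 1) / exp t))"
  proof -
    have e: "complex_of_real t powr (complex_of_real x - 1) = of_real (t powr (x-1))" if "t > 0" for t
      using powr_of_real[of t "x-1"] that by simp
    show ?thesis by (auto simp: indicator_def fun_eq_iff e)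
  qed
  finally have "(\<lambda>t. t powr (x - 1) / exp t) absolutely_integrable_on {0<..}" unfolding set_integrable_def .
  then show ?thesis by (rule abs_int_lborel) (auto simp: powr_of_real[symmetric] simp del: powr_of_real)
qed

lemma ereal_lim_exp_div:
  fixes a :: real assumes a: "a > 0"
  shows "((ereal \<circ> (\<lambda>t. exp (t / a)) \<circ> real_of_ereal) \<longlongrightarrow> ereal 1) (at_right 0)"
    "((ereal \<circ> (\<lambda>t. exp (t / a)) \<circ> real_of_ereal) \<longlongrightarrow> \<infinity>) (at_left \<infinity>)"
proof -
  show "((ereal \<circ> (\<lambda>t. exp (t / a)) \<circ> real_of_ereal) \<longlongrightarrow> ereal 1) (at_right 0)"
    using a by (auto simp: ereal_tendsto_simps zero_ereal_def intro!: tendsto_eq_intros)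
  have "filterlim (\<lambda>x. x * inverse a) at_top at_top"
    using a by (intro filterlim_at_top_mult_tendsto_pos[OF tendsto_const] filterlim_ident) auto
  then show "((ereal \<circ> (\<lambda>t. exp (t / a)) \<circ> real_of_ereal) \<longlongrightarrow> \<infinity>) (at_left \<infinity>)"
  using a by (auto simp: ereal_tendsto_simps divide_inverse intro!: filterlim_compose[OF exp_at_top])
qed

lemma J_real_integrable:
  fixes \<alpha> x :: real assumes \<alpha>: "\<alpha> > 0" and x: "x > 0"
  shows "set_integrable lborel {1<..} (\<lambda>u. u powr (-(\<alpha>+1)) * ln u powr (x - 1))"
proof -
  define f where "f = (\<lambda>u::real. u powr (-(\<alpha>+1)) * ln u powr (x - 1))"
  have eq: "f (exp (t / \<alpha>)) * (exp (t / \<alpha>) / \<alpha>) = (\<alpha> powr (- x)) * (t powr (x - 1) / exp t)" if t: "t > 0" for t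
  proof -
    have e1: "exp (t / \<alpha>) powr (-(\<alpha>+1)) = exp (-(\<alpha>+1) * (t / \<alpha>))" by (simp add: powr_def)
    have e2: "(t / \<alpha>) powr (x - 1) = t powr (x - 1) / \<alpha> powr (x - 1)"
      using t \<alpha> by (simp add: powr_divide)
    have e3: "exp (-(\<alpha>+1) * (t / \<alpha>)) * exp (t / \<alpha>) = exp (- t)"
      using \<alpha> by (simp add: exp_add[symmetric] field_simps)
    have e4: "\<alpha> powr (x - 1) * \<alpha> = \<alpha> powr x" using \<alpha> by (simp add: powr_diff)
    have "f (exp (t / \<alpha>)) * (exp (t / \<alpha>) / \<alpha>) =
        (exp (-(\<alpha>+1) * (t / \<alpha>)) * exp (t / \<alpha>)) * (t / \<alpha>) powr (x - 1) / \<alpha>"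
      unfolding f_def e1 using t by simp
    also have "\<dots> = exp (- t) * t powr (x - 1) / (\<alpha> powr (x - 1) * \<alpha>)"
      unfolding e2 e3 by simp
    also have "\<dots> = (\<alpha> powr (- x)) * (t powr (x - 1) / exp t)"
      unfolding e4 using \<alpha> by (simp add: powr_minus exp_minus field_simps)
    finally show ?thesis .
  qed
  have int: "set_integrable lborel (einterval 0 \<infinity>) (\<lambda>t. f (exp (t / \<alpha>)) * (exp (t / \<alpha>) / \<alpha>))"
  proof -
    have "set_integrable lborel {0<..} (\<lambda>t. (\<alpha> powr (- x)) * (t powr (x - 1) / exp t))"
      by (intro set_integrable_mult_right Gamma_real_set_integrable x)
    then show ?thesis
      by (subst set_integrable_cong[OF refl _ eq]) (auto simp: zero_ereal_def)
  qed
  have "set_integrable lborel (einterval 1 \<infinity>) f"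
  proof (rule interval_integral_substitution_nonneg(1)[of 0 \<infinity> "\<lambda>t. exp (t / \<alpha>)" "\<lambda>t. exp (t / \<alpha>) / \<alpha>" f])
    show "((ereal \<circ> (\<lambda>t. exp (t / \<alpha>)) \<circ> real_of_ereal) \<longlongrightarrow> 1) (at_right 0)"
      using ereal_lim_exp_div(1)[OF \<alpha>] by (simp add: one_ereal_def)
    show "((ereal \<circ> (\<lambda>t. exp (t / \<alpha>)) \<circ> real_of_ereal) \<longlongrightarrow> \<infinity>) (at_left \<infinity>)"
      using ereal_lim_exp_div(2)[OF \<alpha>] .
    show "set_integrable lborel (einterval 0 \<infinity>) (\<lambda>t. f (exp (t / \<alpha>)) * (exp (t / \<alpha>) / \<alpha>))"
      by (rule int)
  qed (use \<alpha> in \<open>auto simp: f_def zero_ereal_def intro!: derivative_eq_intros continuous_intros\<close>)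
  then show ?thesis by (simp add: f_def one_ereal_def)
qed

definition jf :: "complex \<Rightarrow> complex \<Rightarrow> real \<Rightarrow> complex" where
  "jf a z u = complex_of_real u powr (-(a+1)) * complex_of_real (ln u) powr (z - 1)"

lemma powr_real_exp: "x > 0 \<Longrightarrow> complex_of_real x powr w = exp (w * of_real (ln x))"
  by (simp add: powr_def Ln_of_real)

lemma jf_norm: "u > 1 \<Longrightarrow> norm (jf a z u) = u powr (-(Re a+1)) * ln u powr (Re z - 1)"
  by (simp add: jf_def norm_mult norm_powr_real_powr)

lemma jf_measurable[measurable]: "jf a z \<in> borel_measurable borel"
  unfolding jf_def by measurable

lemma jf_integrable:
  assumes "Re a > 0" "Re z > 0"
  shows "set_integrable lborel {1<..} (jf a z)"
proof (rule set_integrable_bound[OF J_real_integrable[of "Re a" "Re z"]])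
  show "set_borel_measurable lborel {1<..} (jf a z)"
    unfolding set_borel_measurable_def by measurable
  show "AE x in lborel. x \<in> {1<..} \<longrightarrow> norm (jf a z x) \<le> norm (x powr - (Re a + 1) * ln x powr (Re z - 1))"
    by (intro AE_I2) (simp add: jf_norm)
qed (use assms in auto)

lemma Gamma_complex_lborel:
  assumes "Re z > 0"
  shows "set_integrable lborel {0<..} (\<lambda>t. complex_of_real t powr (z - 1) / of_real (exp t))"
    "(LINT t:{0<..}|lborel. complex_of_real t powr (z - 1) / of_real (exp t)) = Gamma z"
proof -
  show i: "set_integrable lborel {0<..} (\<lambda>t. complex_of_real t powr (z - 1) / of_real (exp t))"
    by (rule abs_int_lborel[OF absolutely_integrable_Gamma_integral'[OF assms]]) auto
  show "(LINT t:{0<..}|lborel. complex_of_real t powr (z - 1) / of_real (exp t)) = Gamma z"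
    using set_borel_integral_eq_integral(2)[OF i] Gamma_integral_complex'[OF assms]
    by (simp add: integral_unique)
qed

lemma J_real_value:
  fixes a :: real assumes a: "a > 0" and z: "Re z > 0"
  shows "(LINT u:{1<..}|lborel. jf (of_real a) z u) = Gamma z * of_real a powr (-z)"
proof -
  define g where "g = (\<lambda>t. exp (t / a))"
  define g' where "g' = (\<lambda>t. exp (t / a) / a)"
  have eq: "g' t *\<^sub>R jf (of_real a) z (g t) = of_real a powr (-z) * (complex_of_real t powr (z - 1) / of_real (exp t))"
    if t: "t > 0" for t
  proof -
    have "g' t *\<^sub>R jf (of_real a) z (g t) =
       exp (of_real (t/a) - of_real (ln a)) * (exp ((-(of_real a+1)) * of_real (t/a)) * exp ((z - 1) * of_real (ln t - ln a)))"
    proof -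
      have h1: "complex_of_real (ln (exp (t/a))) powr (z - 1) = exp ((z - 1) * of_real (ln t - ln a))"
        using a t powr_real_exp[of "t/a" "z-1"] by (simp add: ln_div del: of_real_divide)
      have h2: "complex_of_real (exp (t/a)) powr (-(of_real a+1)) = exp ((-(of_real a+1)) * of_real (t/a))"
        using a t by (simp add: powr_real_exp)
      have h3: "complex_of_real (exp (t / a) / a) = exp (of_real (t/a) - of_real (ln a))"
      proof -
        have "exp (complex_of_real (ln a)) = of_real a" using a by (simp add: exp_of_real)
        moreover have "exp (complex_of_real (t/a)) = of_real (exp (t/a))" by (simp only: exp_of_real)
        ultimately show ?thesis by (simp add: exp_diff)
      qed
      show ?thesis unfolding g_def g'_def jf_def scaleR_conv_of_real h1 h2 h3 ..
    qed
    also have "\<dots> = exp (of_real (t/a) - of_real (ln a) + (-(of_real a+1)) * of_real (t/a) + (z - 1) * of_real (ln t - ln a))"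
      by (simp add: exp_add)
    also have "of_real (t/a) - of_real (ln a) + (-(of_real a+1)) * of_real (t/a) + (z - 1) * of_real (ln t - ln a)
       = (-z) * of_real (ln a) + (z - 1) * of_real (ln t) - complex_of_real t"
      using a by (simp add: field_simps)
    also have "exp \<dots> = of_real a powr (-z) * (complex_of_real t powr (z - 1) / of_real (exp t))"
      using a t by (simp add: powr_real_exp exp_add exp_diff exp_minus exp_of_real[symmetric] field_simps del: exp_of_real)
    finally show ?thesis .
  qed
  have int2: "set_integrable lborel (einterval 0 \<infinity>) (\<lambda>t. g' t *\<^sub>R jf (of_real a) z (g t))"
    by (subst set_integrable_cong[OF refl _ eq]) (auto simp: zero_ereal_def simp del: times_divide_eq_right intro!: set_integrable_mult_right Gamma_complex_lborel(1)[OF z])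
  have "(LBINT x=ereal 1..\<infinity>. jf (of_real a) z x) = (LBINT t=ereal 0..\<infinity>. g' t *\<^sub>R jf (of_real a) z (g t))"
  proof (rule interval_integral_substitution_integrable)
    show "((ereal \<circ> g \<circ> real_of_ereal) \<longlongrightarrow> ereal 1) (at_right (ereal 0))"
      using ereal_lim_exp_div(1)[OF a] by (simp add: g_def zero_ereal_def)
    show "((ereal \<circ> g \<circ> real_of_ereal) \<longlongrightarrow> \<infinity>) (at_left \<infinity>)"
      using ereal_lim_exp_div(2)[OF a] by (simp add: g_def)
    show "set_integrable lborel (einterval (ereal 0) \<infinity>) (\<lambda>t. g' t *\<^sub>R jf (of_real a) z (g t))"
      using int2 by (simp add: zero_ereal_def)
    show "set_integrable lborel (einterval (ereal 1) \<infinity>) (jf (of_real a) z)"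
      using jf_integrable[of "of_real a" z] a z by simp
  qed (use a in \<open>auto simp: g_def g'_def jf_def complex_nonpos_Reals_iff divide_le_0_iff intro!: derivative_eq_intros continuous_intros\<close>)
  also have "(LBINT x=ereal 1..\<infinity>. jf (of_real a) z x) = (LINT u:{1<..}|lborel. jf (of_real a) z u)"
    by (rule interval_integral_to_infinity_eq)
  also have "(LBINT t=ereal 0..\<infinity>. g' t *\<^sub>R jf (of_real a) z (g t)) =
     (LINT t:{0<..}|lborel. of_real a powr (-z) * (complex_of_real t powr (z - 1) / of_real (exp t)))"
    unfolding interval_integral_to_infinity_eq by (rule set_lebesgue_integral_cong) (auto simp: eq)
  also have "\<dots> = of_real a powr (-z) * Gamma z"
    by (subst set_integral_mult_right) (simp only: Gamma_complex_lborel(2)[OF z])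
  finally show ?thesis by simp
qed

lemma one_islimpt_pos_reals: "(1::complex) islimpt (complex_of_real ` {0<..})"
  unfolding islimpt_approachable
proof (intro allI impI)
  fix e :: real assume e: "e > 0"
  define x where "x = 1 + min (e/2) (1/2)"
  have "x > 0" using e by (simp add: x_def)
  moreover have "complex_of_real x \<noteq> 1" using e by (simp add: x_def)
  moreover have "dist (complex_of_real x) 1 < e"
  proof -
    have "complex_of_real x - 1 = of_real (x - 1)" by simp
    then have "dist (complex_of_real x) 1 = \<bar>x - 1\<bar>" by (simp only: dist_norm norm_of_real)
    then show ?thesis using e by (simp add: x_def)
  qed
  ultimately show "\<exists>x'\<in>complex_of_real ` {0<..}. x' \<noteq> 1 \<and> dist x' 1 < e" by blast
qed

lemma jf_holo: "u > 1 \<Longrightarrow> (\<lambda>a. jf a z u) holomorphic_on A"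
  unfolding jf_def by (simp add: powr_real_exp) (intro holomorphic_intros)

lemma J_value:
  assumes a: "Re a > 0" and z: "Re z > 0"
  shows "(LINT u:{1<..}|lborel. jf a z u) = Gamma z * a powr (-z)"
proof -
  define R where "R = {a. Re a > 0}"
  have R: "open R" unfolding R_def by (simp add: open_halfspace_Re_gt)
  have hol: "(\<lambda>a. LINT u:{1<..}|lborel. jf a z u) holomorphic_on R"
  proof (rule holo_param_integral[OF R])
    show "(\<lambda>a. jf a z t) holomorphic_on R" if "t \<in> {1<..}" for t using that by (simp add: jf_holo)
    show "jf w z \<in> borel_measurable lborel" for w by measurable
    fix w assume w: "w \<in> R"
    define r where "r = Re w / 2"
    have r: "r > 0" using w by (simp add: R_def r_def)
    have ReB: "Re w' \<ge> Re w - r" if "w' \<in> cball w r" for w'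
    proof -
      have "\<bar>Re (w - w')\<bar> \<le> r" using that abs_Re_le_cmod[of "w - w'"] by (simp add: dist_norm)
      then show ?thesis by simp
    qed
    have sub: "cball w r \<subseteq> R" using ReB r by (force simp: R_def r_def)
    have "set_integrable lborel {1<..} (\<lambda>u. u powr (-((Re w - r)+1)) * ln u powr (Re z - 1))"
      by (rule J_real_integrable) (use r z in \<open>auto simp: r_def\<close>)
    moreover have "\<forall>w'\<in>cball w r. \<forall>t\<in>{1::real<..}. norm (jf w' z t) \<le> t powr (-((Re w - r)+1)) * ln t powr (Re z - 1)"
    proof (intro ballI)
      fix w' and t :: real assume w': "w' \<in> cball w r" and t: "t \<in> {1<..}"
      have "t powr (-(Re w'+1)) \<le> t powr (-((Re w - r)+1))"
        using ReB[OF w'] t by (intro powr_mono) auto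
      then show "norm (jf w' z t) \<le> t powr (-((Re w - r)+1)) * ln t powr (Re z - 1)"
        using t by (simp add: jf_norm mult_right_mono)
    qed
    ultimately show "\<exists>r>0. cball w r \<subseteq> R \<and> (\<exists>g. set_integrable lborel {1<..} g \<and>
                (\<forall>w'\<in>cball w r. \<forall>t\<in>{1<..}. norm (jf w' z t) \<le> g t))"
      using r sub by blast
  qed simp
  have hol2: "(\<lambda>a. Gamma z * a powr (-z)) holomorphic_on R"
    by (intro holomorphic_intros) (auto simp: R_def complex_nonpos_Reals_iff)
  have "(\<lambda>a. (LINT u:{1<..}|lborel. jf a z u) - Gamma z * a powr (-z)) a = 0"
  proof (rule analytic_continuation[where U="complex_of_real ` {0<..}" and \<xi>=1 and S=R and
      f="\<lambda>a. (LINT u:{1<..}|lborel. jf a z u) - Gamma z * a powr (-z)"])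
    show "(\<lambda>a. (LINT u:{1<..}|lborel. jf a z u) - Gamma z * a powr (-z)) holomorphic_on R"
      using hol hol2 by (rule holomorphic_on_diff)
    show "open R" by fact
    show "connected R" unfolding R_def by (intro convex_connected convex_halfspace_Re_gt)
    show "complex_of_real ` {0<..} \<subseteq> R" by (auto simp: R_def)
    show "1 \<in> R" by (simp add: R_def)
    show "1 islimpt complex_of_real ` {0<..}" by (rule one_islimpt_pos_reals)
    show "a \<in> R" using a by (simp add: R_def)
    fix x assume "x \<in> complex_of_real ` {0<..}"
    then obtain y where "y > 0" "x = of_real y" by auto
    then show "(LINT u:{1<..}|lborel. jf x z u) - Gamma z * x powr (-z) = 0"
      using J_real_value[of y z] z by simp
  qed
  then show ?thesis by simp
qed




lemma set_integral_sum':
  fixes f :: "'i \<Rightarrow> real \<Rightarrow> complex"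
  assumes "finite I" "\<And>i. i \<in> I \<Longrightarrow> set_integrable M B (f i)"
  shows "set_integrable M B (\<lambda>x. \<Sum>i\<in>I. f i x)"
    "(LINT x:B|M. (\<Sum>i\<in>I. f i x)) = (\<Sum>i\<in>I. LINT x:B|M. f i x)"
proof -
  have *: "(\<lambda>x. indicator B x *\<^sub>R (\<Sum>i\<in>I. f i x)) = (\<lambda>x. \<Sum>i\<in>I. indicator B x *\<^sub>R f i x)"
    by (simp only: scaleR_sum_right)
  show "set_integrable M B (\<lambda>x. \<Sum>i\<in>I. f i x)"
    unfolding set_integrable_def * by (rule Bochner_Integration.integrable_sum) (rule assms(2)[unfolded set_integrable_def])
  show "(LINT x:B|M. (\<Sum>i\<in>I. f i x)) = (\<Sum>i\<in>I. LINT x:B|M. f i x)"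
    unfolding set_lebesgue_integral_def * by (rule Bochner_Integration.integral_sum) (rule assms(2)[unfolded set_integrable_def])
qed

definition Tm :: "complex \<Rightarrow> nat \<Rightarrow> complex \<Rightarrow> complex \<Rightarrow> complex" where
  "Tm l m w s = pochhammer w m * (s - l) powr (-(w + of_nat m))"

definition EZ :: "(complex \<times> nat) set \<Rightarrow> (complex \<Rightarrow> nat \<Rightarrow> int) \<Rightarrow> complex \<Rightarrow> complex \<Rightarrow> complex" where
  "EZ A c w s = (\<Sum>(l, m)\<in>A. of_int (c l m) * Tm l m w s)"

lemma Z_integrand_eq:
  assumes hN: "\<forall>u>0. N u = (\<Sum>(l, m)\<in>A. of_int (c l m) * (complex_of_real u) powr l
                                         * (complex_of_real (ln u)) ^ m)"
    and u: "u > 1"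
  shows "Z_integrand N w s u = (\<Sum>(l, m)\<in>A. of_int (c l m) * jf (s - l) (w + of_nat m) u)"
proof -
  have lnu: "ln u > 0" using u by simp
  have e: "complex_of_real u powr l * complex_of_real (ln u) ^ m / complex_of_real u powr (s + 1) *
      complex_of_real (ln u) powr (w - 1) = jf (s - l) (w + of_nat m) u" for l m
  proof -
    have p: "complex_of_real (ln u) ^ m = exp (of_nat m * of_real (ln (ln u)))"
    proof -
      have "exp (complex_of_real (ln (ln u))) = of_real (ln u)"
        using lnu by (simp only: exp_of_real) simp
      then show ?thesis by (simp only: exp_of_nat_mult)
    qed
    show ?thesis using u lnu
      unfolding jf_def p by (simp add: powr_real_exp exp_add[symmetric] exp_diff[symmetric] field_simps)
  qed
  have "Z_integrand N w s u = (\<Sum>(l, m)\<in>A. of_int (c l m) * (complex_of_real u powr l * complex_of_real (ln u) ^ m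
      / complex_of_real u powr (s + 1) * complex_of_real (ln u) powr (w - 1)))"
    using hN u unfolding Z_integrand_def
    by (simp add: sum_divide_distrib sum_distrib_right case_prod_unfold mult_ac sum_distrib_left)
  also have "\<dots> = (\<Sum>(l, m)\<in>A. of_int (c l m) * jf (s - l) (w + of_nat m) u)"
    by (rule sum.cong) (auto simp: e[symmetric] mult_ac)
  finally show ?thesis .
qed

lemma rGamma_Gamma_poch:
  assumes "Re w > 0"
  shows "rGamma w * Gamma (w + of_nat m) = pochhammer w m"
proof -
  have "w + of_nat m \<notin> \<int>\<^sub>\<le>\<^sub>0" using assms
    using nonpos_Ints_subset_nonpos_Reals by (fastforce simp: complex_nonpos_Reals_iff)
  then have "rGamma (w + of_nat m) * Gamma (w + of_nat m) = 1"
    by (simp add: rGamma_inverse_Gamma Gamma_eq_zero_iff)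
  then show ?thesis by (simp add: pochhammer_rGamma[of w m])
qed

lemma Z_val:
  assumes hN: "\<forall>u>0. N u = (\<Sum>(l, m)\<in>A. of_int (c l m) * (complex_of_real u) powr l
                                         * (complex_of_real (ln u)) ^ m)"
    and A: "finite A" and w: "Re w > 0" and s: "\<forall>(l,m)\<in>A. Re l < Re s"
  shows "Z_conv N w s" "Z_int N w s = EZ A c w s"
proof -
  have each: "set_integrable lborel {1<..} (\<lambda>u. case p of (l, m) \<Rightarrow> of_int (c l m) * jf (s - l) (w + of_nat m) u)"
    if "p \<in> A" for p
  proof -
    obtain l m where p: "p = (l, m)" by (cases p)
    have "Re (s - l) > 0" using s that p by auto
    moreover have "Re (w + of_nat m) > 0" using w by simp
    ultimately show ?thesis unfolding p using jf_integrable by auto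
  qed
  have cong: "set_integrable lborel {1<..} (Z_integrand N w s) =
      set_integrable lborel {1<..} (\<lambda>u. \<Sum>p\<in>A. case p of (l, m) \<Rightarrow> of_int (c l m) * jf (s - l) (w + of_nat m) u)"
    by (rule set_integrable_cong) (auto simp: Z_integrand_eq[OF hN] case_prod_unfold)
  show "Z_conv N w s"
    unfolding Z_conv_def cong by (rule set_integral_sum'(1)[OF A each])
  have "(LINT u:{1<..}|lborel. Z_integrand N w s u) =
      (LINT u:{1<..}|lborel. \<Sum>p\<in>A. case p of (l, m) \<Rightarrow> of_int (c l m) * jf (s - l) (w + of_nat m) u)"
    by (rule set_lebesgue_integral_cong) (auto simp: Z_integrand_eq[OF hN] case_prod_unfold)
  also have "\<dots> = (\<Sum>p\<in>A. LINT u:{1<..}|lborel. case p of (l, m) \<Rightarrow> of_int (c l m) * jf (s - l) (w + of_nat m) u)"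
    by (rule set_integral_sum'(2)[OF A each])
  also have "\<dots> = (\<Sum>p\<in>A. case p of (l, m) \<Rightarrow> of_int (c l m) * (Gamma (w + of_nat m) * (s - l) powr (-(w + of_nat m))))"
  proof (rule sum.cong[OF refl])
    fix p assume "p \<in> A"
    obtain l m where p: "p = (l, m)" by (cases p)
    have "Re (s - l) > 0" using s \<open>p \<in> A\<close> p by auto
    moreover have "Re (w + of_nat m) > 0" using w by simp
    ultimately show "(LINT u:{1<..}|lborel. case p of (l, m) \<Rightarrow> of_int (c l m) * jf (s - l) (w + of_nat m) u) =
       (case p of (l, m) \<Rightarrow> of_int (c l m) * (Gamma (w + of_nat m) * (s - l) powr (-(w + of_nat m))))"
      unfolding p by (simp add: J_value)
  qed
  finally show "Z_int N w s = EZ A c w s"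
    unfolding Z_int_def EZ_def Tm_def
    by (simp add: sum_distrib_left case_prod_unfold rGamma_Gamma_poch[OF w, symmetric] mult_ac)
qed




definition Nf :: "(complex \<times> nat) set \<Rightarrow> (complex \<Rightarrow> nat \<Rightarrow> int) \<Rightarrow> real \<Rightarrow> complex" where
  "Nf A c u = (\<Sum>(l, m)\<in>A. of_int (c l m) * (complex_of_real u) powr l * (complex_of_real (ln u)) ^ m)"

lemma Nf_measurable[measurable]: "Nf A c \<in> borel_measurable borel"
  unfolding Nf_def case_prod_unfold by measurable

lemma Z_integrand_Nf_measurable[measurable]: "Z_integrand (Nf A c) w s \<in> borel_measurable borel"
  unfolding Z_integrand_def by measurable

lemma Z_norm: "u > 1 \<Longrightarrow> norm (Z_integrand N w s u) = norm (N u / of_real u powr (s+1)) * ln u powr (Re w - 1)"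
  unfolding Z_integrand_def by (subst norm_mult) (simp add: norm_powr_real_powr)

lemma Z_integrand_holo: "u > 1 \<Longrightarrow> (\<lambda>w. Z_integrand N w s u) holomorphic_on X"
  unfolding Z_integrand_def by (simp add: powr_real_exp) (auto intro!: holomorphic_intros)

lemma set_integrable_norm':
  fixes f :: "real \<Rightarrow> complex"
  assumes "set_integrable lborel B f"
  shows "set_integrable lborel B (\<lambda>x. norm (f x))"
proof -
  have "integrable lborel (\<lambda>x. norm (indicator B x *\<^sub>R f x))"
    using assms unfolding set_integrable_def by (rule integrable_norm)
  then show ?thesis unfolding set_integrable_def by (simp add: indicator_def if_distrib cong: if_cong)
qed

lemma Z_holo:
  assumes hN: "\<forall>u>0. N u = (\<Sum>(l, m)\<in>A. of_int (c l m) * (complex_of_real u) powr l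
                                         * (complex_of_real (ln u)) ^ m)"
    and A: "finite A" and s: "\<forall>(l,m)\<in>A. Re l < Re s"
    and \<epsilon>: "\<epsilon> > 0" and conv: "\<And>w. w \<in> cball w0 \<epsilon> \<Longrightarrow> Z_conv N w s"
  shows "\<And>w. w \<in> ball w0 (\<epsilon>/2) \<Longrightarrow> Z_int N w s = EZ A c w s"
proof -
  have NNf: "Z_integrand N w s u = Z_integrand (Nf A c) w s u" if "u > 1" for w u
    using hN that unfolding Z_integrand_def Nf_def by simp
  define R where "R = {w. Re w > Re w0 - \<epsilon>/2}"
  have R: "open R" unfolding R_def by (simp add: open_halfspace_Re_gt)
  define x1 where "x1 = Re w0 - \<epsilon>"
  define K where "K = (\<lambda>u. norm (Nf A c u / of_real u powr (s+1)))"
  have intx1: "set_integrable lborel {1<..} (\<lambda>u. K u * ln u powr (x1 - 1))"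
  proof -
    have "w0 - of_real \<epsilon> \<in> cball w0 \<epsilon>" using \<epsilon> by (simp add: dist_norm)
    then have "set_integrable lborel {1<..} (\<lambda>u. norm (Z_integrand N (w0 - of_real \<epsilon>) s u))"
      using conv unfolding Z_conv_def by (intro set_integrable_norm') auto
    then show ?thesis
      by (rule set_integrable_cong[THEN iffD1, rotated -1]) (auto simp: Z_norm K_def x1_def hN Nf_def)
  qed
  have intpos: "set_integrable lborel {1<..} (\<lambda>u. K u * ln u powr (x - 1))" if "x > 0" for x
  proof -
    have "Z_conv N (of_real x) s" by (rule Z_val(1)[OF hN A _ s]) (use that in simp)
    then have "set_integrable lborel {1<..} (\<lambda>u. norm (Z_integrand N (of_real x) s u))"
      unfolding Z_conv_def by (intro set_integrable_norm')
    then show ?thesis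
      by (rule set_integrable_cong[THEN iffD1, rotated -1]) (auto simp: Z_norm K_def hN Nf_def)
  qed
  have hol: "(\<lambda>w. LINT u:{1<..}|lborel. Z_integrand (Nf A c) w s u) holomorphic_on R"
  proof (rule holo_param_integral[OF R])
    show "(\<lambda>w. Z_integrand (Nf A c) w s t) holomorphic_on R" if "t \<in> {1<..}" for t
      using that by (simp add: Z_integrand_holo)
    show "Z_integrand (Nf A c) w s \<in> borel_measurable lborel" for w by measurable
    fix w assume w: "w \<in> R"
    define r where "r = (Re w - (Re w0 - \<epsilon>/2)) / 2"
    have r: "r > 0" using w by (simp add: R_def r_def)
    have ReB: "Re w' \<ge> Re w - r" "Re w' \<le> Re w + r" if "w' \<in> cball w r" for w'
    proof -
      have "\<bar>Re (w - w')\<bar> \<le> r" using that abs_Re_le_cmod[of "w - w'"] by (simp add: dist_norm)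
      then show "Re w' \<ge> Re w - r" "Re w' \<le> Re w + r" by auto
    qed
    have sub: "cball w r \<subseteq> R"
    proof
      fix w' assume "w' \<in> cball w r"
      from ReB(1)[OF this] w show "w' \<in> R" by (simp add: R_def r_def field_simps)
    qed
    define x2 where "x2 = \<bar>Re w\<bar> + r + 1"
    have "set_integrable lborel {1<..} (\<lambda>u. K u * ln u powr (x1 - 1) + K u * ln u powr (x2 - 1))"
      using intx1 intpos[of x2] r by (intro set_integral_add) (auto simp: x2_def)
    moreover have "\<forall>w'\<in>cball w r. \<forall>t\<in>{1::real<..}. norm (Z_integrand (Nf A c) w' s t) \<le>
        K t * ln t powr (x1 - 1) + K t * ln t powr (x2 - 1)"
    proof (intro ballI)
      fix w' and t :: real assume w': "w' \<in> cball w r" and t: "t \<in> {1<..}"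
      have lt: "ln t > 0" using t by simp
      have lo: "x1 \<le> Re w'" using ReB(1)[OF w'] w \<epsilon> by (simp add: x1_def r_def R_def field_simps)
      have hi: "Re w' \<le> x2" using ReB(2)[OF w'] by (simp add: x2_def)
      have "ln t powr (Re w' - 1) \<le> ln t powr (x1 - 1) + ln t powr (x2 - 1)"
      proof (cases "ln t \<le> 1")
        case True
        then have "ln t powr (Re w' - 1) \<le> ln t powr (x1 - 1)" using lt lo by (intro powr_mono') auto
        then show ?thesis by (simp add: add_increasing2)
      next
        case False
        then have "ln t powr (Re w' - 1) \<le> ln t powr (x2 - 1)" using hi by (intro powr_mono) auto
        then show ?thesis by (simp add: add_increasing)
      qed
      then have "K t * ln t powr (Re w' - 1) \<le> K t * (ln t powr (x1 - 1) + ln t powr (x2 - 1))"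
        by (intro mult_left_mono) (auto simp: K_def)
      then show "norm (Z_integrand (Nf A c) w' s t) \<le> K t * ln t powr (x1 - 1) + K t * ln t powr (x2 - 1)"
        using t by (simp add: Z_norm K_def distrib_left)
    qed
    ultimately show "\<exists>r>0. cball w r \<subseteq> R \<and> (\<exists>g. set_integrable lborel {1<..} g \<and>
                (\<forall>w'\<in>cball w r. \<forall>t\<in>{1<..}. norm (Z_integrand (Nf A c) w' s t) \<le> g t))"
      using r sub by blast
  qed simp
  have ZI: "Z_int N w s = rGamma w * (LINT u:{1<..}|lborel. Z_integrand (Nf A c) w s u)" for w
    unfolding Z_int_def by (subst set_lebesgue_integral_cong[where g="Z_integrand (Nf A c) w s"]) (auto simp: NNf)
  have sl: "s - l \<notin> \<real>\<^sub>\<le>\<^sub>0" if "(l, m) \<in> A" for l m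
    using s that by (auto simp: complex_nonpos_Reals_iff)
  have holE: "(\<lambda>w. EZ A c w s) holomorphic_on X" for X
    unfolding EZ_def Tm_def case_prod_unfold
    by (intro holomorphic_intros) (use sl in \<open>auto\<close>)
  fix w assume wb: "w \<in> ball w0 (\<epsilon>/2)"
  define \<xi> where "\<xi> = complex_of_real (\<bar>Re w0\<bar> + 1)"
  have "(\<lambda>w. rGamma w * (LINT u:{1<..}|lborel. Z_integrand (Nf A c) w s u) - EZ A c w s) w = 0"
  proof (rule analytic_continuation[where U="R \<inter> {w. Re w > 0}" and \<xi>=\<xi> and S=R and
      f="\<lambda>w. rGamma w * (LINT u:{1<..}|lborel. Z_integrand (Nf A c) w s u) - EZ A c w s"])
    show "(\<lambda>w. rGamma w * (LINT u:{1<..}|lborel. Z_integrand (Nf A c) w s u) - EZ A c w s) holomorphic_on R"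
      by (intro holomorphic_on_diff holomorphic_on_mult hol holE) (auto intro: holomorphic_intros)
    show "open R" by fact
    show "connected R" unfolding R_def by (intro convex_connected convex_halfspace_Re_gt)
    show "R \<inter> {w. Re w > 0} \<subseteq> R" by blast
    have "\<xi> \<in> R \<inter> {w. Re w > 0}" using \<epsilon> by (auto simp: \<xi>_def R_def)
    then show "\<xi> \<in> R" by blast
    show "\<xi> islimpt R \<inter> {w. Re w > 0}"
      by (rule open_imp_islimpt) (use \<open>\<xi> \<in> R \<inter> {w. Re w > 0}\<close> R in \<open>auto intro: open_Int open_halfspace_Re_gt\<close>)
    have "dist w0 w < \<epsilon>/2" using wb by simp
    then have "\<bar>Re (w0 - w)\<bar> < \<epsilon>/2" using abs_Re_le_cmod[of "w0 - w"] by (simp add: dist_norm)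
    then have "Re w0 - Re w < \<epsilon>/2" using abs_ge_self[of "Re (w0 - w)"] by simp
    then show "w \<in> R" by (simp add: R_def)
    fix x assume x: "x \<in> R \<inter> {w. Re w > 0}"
    show "rGamma x * (LINT u:{1<..}|lborel. Z_integrand (Nf A c) x s u) - EZ A c x s = 0"
      using Z_val(2)[OF hN A _ s, of x] x ZI[of x] by simp
  qed
  then show "Z_int N w s = EZ A c w s" using ZI[of w] by simp
qed




lemma EZ_holo:
  assumes s: "\<forall>(l,m)\<in>A. Re l < Re s"
  shows "(\<lambda>w. EZ A c w s) holomorphic_on X"
proof -
  have sl: "s - l \<notin> \<real>\<^sub>\<le>\<^sub>0" if "(l, m) \<in> A" for l m
    using s that by (auto simp: complex_nonpos_Reals_iff)
  show ?thesis
    unfolding EZ_def Tm_def case_prod_unfold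
    by (intro holomorphic_intros) (use sl in \<open>auto\<close>)
qed

lemma zetaN_val:
  assumes hN: "\<forall>u>0. N u = (\<Sum>(l, m)\<in>A. of_int (c l m) * (complex_of_real u) powr l
                                         * (complex_of_real (ln u)) ^ m)"
    and A: "finite A" and s: "\<forall>(l,m)\<in>A. Re l < Re s"
  shows "zetaN N s = exp (deriv (\<lambda>w. EZ A c w s) 0)"
proof -
  have "(THE d. \<exists>F U. Z_ext N s F U \<and> deriv F 0 = d) = deriv (\<lambda>w. EZ A c w s) 0"
  proof (rule the_equality)
    have "Z_ext N s (\<lambda>w. EZ A c w s) UNIV"
      unfolding Z_ext_def
    proof (intro conjI)
      show "(\<lambda>w. EZ A c w s) holomorphic_on UNIV" by (rule EZ_holo[OF s])
      show "\<exists>V. open V \<and> V \<noteq> {} \<and> V \<subseteq> UNIV \<and> (\<forall>w\<in>V. Z_conv N w s \<and> EZ A c w s = Z_int N w s)"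
      proof (intro exI[of _ "{w. Re w > 0}"] conjI ballI)
        show "open {w. Re w > 0}" by (simp add: open_halfspace_Re_gt)
        show "{w. Re w > 0} \<noteq> {}" by (auto intro!: exI[of _ 1])
        fix w assume "w \<in> {w. Re w > 0}"
        then show "Z_conv N w s" "EZ A c w s = Z_int N w s"
          using Z_val[OF hN A _ s, of w] by auto
      qed simp
    qed auto
    then show "\<exists>F U. Z_ext N s F U \<and> deriv F 0 = deriv (\<lambda>w. EZ A c w s) 0" by blast
  next
    fix d assume "\<exists>F U. Z_ext N s F U \<and> deriv F 0 = d"
    then obtain F U V where U: "open U" "connected U" "0 \<in> U" "F holomorphic_on U"
      and V: "open V" "V \<noteq> {}" "V \<subseteq> U" "\<And>w. w \<in> V \<Longrightarrow> Z_conv N w s \<and> F w = Z_int N w s"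
      and d: "deriv F 0 = d"
      unfolding Z_ext_def by blast
    obtain w0 where w0: "w0 \<in> V" using V(2) by blast
    obtain \<epsilon> where \<epsilon>: "\<epsilon> > 0" "cball w0 \<epsilon> \<subseteq> V" using open_contains_cball[of V] V(1) w0 by blast
    have eqb: "F w = EZ A c w s" if "w \<in> ball w0 (\<epsilon>/2)" for w
    proof -
      have "w \<in> V" using that \<epsilon> by auto
      then have "F w = Z_int N w s" using V(4) by blast
      also have "\<dots> = EZ A c w s"
        by (rule Z_holo[OF hN A s \<epsilon>(1) _ that]) (use \<epsilon>(2) V(4) in blast)
      finally show ?thesis .
    qed
    have eqU: "F w = EZ A c w s" if "w \<in> U" for w
    proof -
      have "(\<lambda>w. F w - EZ A c w s) w = 0"
      proof (rule analytic_continuation[where U="ball w0 (\<epsilon>/2)" and \<xi>=w0 and S=U and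
          f="\<lambda>w. F w - EZ A c w s"])
        show "(\<lambda>w. F w - EZ A c w s) holomorphic_on U"
          by (intro holomorphic_on_diff U(4) EZ_holo[OF s])
        have "ball w0 (\<epsilon>/2) \<subseteq> cball w0 \<epsilon>" using \<epsilon> by (auto simp: subset_iff)
        then show "ball w0 (\<epsilon>/2) \<subseteq> U" using \<epsilon> V(3) by blast
        show "w0 \<in> U" using w0 V(3) by auto
        show "w0 islimpt ball w0 (\<epsilon>/2)" by (rule open_imp_islimpt) (use \<epsilon> in auto)
      qed (use U that eqb in auto)
      then show ?thesis by simp
    qed
    have "deriv F 0 = deriv (\<lambda>w. EZ A c w s) 0"
    proof (rule deriv_cong_ev)
      show "eventually (\<lambda>x. F x = EZ A c x s) (nhds 0)"
        using eventually_nhds_in_open[OF U(1) U(3)] by eventually_elim (rule eqU)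
    qed simp
    then show "d = deriv (\<lambda>w. EZ A c w s) 0" using d by simp
  qed
  then show ?thesis unfolding zetaN_def by simp
qed




definition Dm :: "complex \<Rightarrow> nat \<Rightarrow> complex \<Rightarrow> complex" where
  "Dm l m s = (if m = 0 then - Ln (s - l) else fact (m - 1) / (s - l) ^ m)"

lemma Tm_deriv:
  assumes sl: "s \<noteq> l"
  shows "((\<lambda>w. Tm l m w s) has_field_derivative Dm l m s) (at 0)"
proof -
  define L where "L = Ln (s - l)"
  have Tm_eq: "(\<lambda>w. Tm l m w s) = (\<lambda>w. pochhammer w m * exp (-(w + of_nat m) * L))"
    using sl by (auto simp: Tm_def powr_def L_def fun_eq_iff)
  have eL: "exp (- (of_nat m) * L) = inverse ((s - l) ^ m)"
  proof -
    have "exp (of_nat m * L) = (s - l) ^ m"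
      using sl by (simp add: L_def exp_of_nat_mult)
    then show ?thesis by (simp add: exp_minus)
  qed
  show ?thesis
  proof (cases m)
    case 0
    have "((\<lambda>w. exp (-(w + of_nat m) * L)) has_field_derivative (- L) * exp (-(0 + of_nat m) * L)) (at 0)"
      by (auto intro!: derivative_eq_intros)
    then show ?thesis unfolding Tm_eq using 0 by (simp add: Dm_def L_def)
  next
    case (Suc k)
    have "(\<lambda>w::complex. pochhammer (w + 1) k) holomorphic_on UNIV" by (intro holomorphic_intros)
    then have "(\<lambda>w::complex. pochhammer (w + 1) k) field_differentiable (at 0)"
      by (rule holomorphic_on_imp_differentiable_at) auto
    then obtain P' where P': "((\<lambda>w::complex. pochhammer (w + 1) k) has_field_derivative P') (at 0)"
      unfolding field_differentiable_def by blast
    have d1: "((\<lambda>w::complex. w * pochhammer (w + 1) k) has_field_derivative pochhammer 1 k) (at 0)"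
      using DERIV_mult[OF DERIV_ident P'] by simp
    have d2: "((\<lambda>w::complex. exp (-(w + of_nat m) * L)) has_field_derivative (- L) * exp (- (of_nat m) * L)) (at 0)"
      by (auto intro!: derivative_eq_intros)
    have "((\<lambda>w. (w * pochhammer (w + 1) k) * exp (-(w + of_nat m) * L)) has_field_derivative
        pochhammer 1 k * exp (- (of_nat m) * L)) (at 0)"
      using DERIV_mult[OF d1 d2] by simp
    moreover have "(\<lambda>w. Tm l m w s) = (\<lambda>w. (w * pochhammer (w + 1) k) * exp (-(w + of_nat m) * L))"
      using Tm_eq unfolding Suc pochhammer_rec by simp
    ultimately show ?thesis
      using eL Suc by (simp add: Dm_def pochhammer_fact field_simps)
  qed
qed

lemma EZ_deriv:
  assumes s: "\<forall>(l,m)\<in>A. Re l < Re s"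
  shows "deriv (\<lambda>w. EZ A c w s) 0 = (\<Sum>(l, m)\<in>A. of_int (c l m) * Dm l m s)"
proof (rule DERIV_imp_deriv)
  show "((\<lambda>w. EZ A c w s) has_field_derivative (\<Sum>(l, m)\<in>A. of_int (c l m) * Dm l m s)) (at 0)"
    unfolding EZ_def case_prod_unfold
  proof (rule DERIV_sum)
    fix p assume p: "p \<in> A"
    then have "s \<noteq> fst p" using s by auto
    then show "((\<lambda>w. of_int (c (fst p) (snd p)) * Tm (fst p) (snd p) w s) has_field_derivative
        of_int (c (fst p) (snd p)) * Dm (fst p) (snd p) s) (at 0)"
      by (intro DERIV_cmult Tm_deriv)
  qed
qed




definition gfac :: "complex \<Rightarrow> nat \<Rightarrow> int \<Rightarrow> complex \<Rightarrow> complex" where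
  "gfac l m k s = (if m = 0 then (s - l) powi (-k) else exp (of_int k * (fact (m - 1) / (s - l) ^ m)))"

definition GF :: "(complex \<times> nat) set \<Rightarrow> (complex \<Rightarrow> nat \<Rightarrow> int) \<Rightarrow> complex \<Rightarrow> complex" where
  "GF A c s = (\<Prod>(l, m)\<in>A. gfac l m (c l m) s)"

lemma exp_cD: "s \<noteq> l \<Longrightarrow> exp (of_int k * Dm l m s) = gfac l m k s"
proof (cases "m = 0")
  case True
  assume sl: "s \<noteq> l"
  have "exp (of_int k * Dm l m s) = exp (of_int (-k) * Ln (s - l))"
    using True by (simp add: Dm_def)
  also have "\<dots> = (s - l) powr of_int (-k)" using sl by (simp add: powr_def)
  also have "\<dots> = (s - l) powi (-k)" using sl by (subst complex_powr_of_int) auto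
  finally show ?thesis using True by (simp add: gfac_def)
qed (simp add: Dm_def gfac_def)

lemma zeta_GF:
  assumes hN: "\<forall>u>0. N u = (\<Sum>(l, m)\<in>A. of_int (c l m) * (complex_of_real u) powr l
                                         * (complex_of_real (ln u)) ^ m)"
    and A: "finite A" and s: "\<forall>(l,m)\<in>A. Re l < Re s"
  shows "zetaN N s = GF A c s"
proof -
  have "zetaN N s = exp (\<Sum>(l, m)\<in>A. of_int (c l m) * Dm l m s)"
    using zetaN_val[OF hN A s] EZ_deriv[OF s] by simp
  also have "\<dots> = (\<Prod>p\<in>A. exp (case p of (l, m) \<Rightarrow> of_int (c l m) * Dm l m s))"
    by (rule exp_sum[OF A])
  also have "\<dots> = GF A c s"
    unfolding GF_def
  proof (rule prod.cong[OF refl])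
    fix p assume p: "p \<in> A"
    obtain l m where lm: "p = (l, m)" by (cases p)
    have "s \<noteq> l" using s p lm by auto
    then show "exp (case p of (l, m) \<Rightarrow> of_int (c l m) * Dm l m s) = (case p of (l, m) \<Rightarrow> gfac l m (c l m) s)"
      unfolding lm by (simp add: exp_cD)
  qed
  finally show ?thesis .
qed

lemma GF_holo:
  "GF A c holomorphic_on (- (fst ` A))"
proof -
  have "(\<lambda>s. gfac l m k s) holomorphic_on (- (fst ` A))" if "(l, m) \<in> A" for l m k
  proof -
    have ne: "s - l \<noteq> 0" if "s \<in> - (fst ` A)" for s
      using that \<open>(l, m) \<in> A\<close> by force
    show ?thesis
    proof (cases "m = 0")
      case True
      have "(\<lambda>s. (s - l) powi (-k)) holomorphic_on (- (fst ` A))"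
        by (rule holomorphic_on_power_int) (use ne in \<open>auto intro!: holomorphic_intros\<close>)
      then show ?thesis using True by (simp add: gfac_def)
    next
      case False
      have "(\<lambda>s. exp (of_int k * (fact (m - 1) / (s - l) ^ m))) holomorphic_on (- (fst ` A))"
      proof -
        have lA: "l \<in> fst ` A" using that by force
        show ?thesis by (intro holomorphic_intros) (use lA in auto)
      qed
      then show ?thesis using False by (simp add: gfac_def)
    qed
  qed
  then show ?thesis
    unfolding GF_def case_prod_unfold
    by (intro holomorphic_on_prod) auto
qed

lemma gfac_neg:
  assumes "z \<noteq> l"
  shows "gfac (-l) m ((-1)^m * k) (-z) = (if m = 0 then exp (- of_int k * (\<i> * pi)) else 1) * gfac l m k z"
proof (cases "m = 0")
  case True
  have e: "l - z = (-1) * (z - l)" by simp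
  have g1: "gfac (-l) m ((-1)^m * k) (-z) = (l - z) powi (-k)"
    using True unfolding gfac_def by simp
  have g2: "(l - z) powi (-k) = (-1) powi (-k) * (z - l) powi (-k)"
    unfolding e by (rule power_int_mult_distrib)
  have "(-1 :: complex) powi (-k) = (-1) powr of_int (-k)"
    by (rule complex_powr_of_int[symmetric]) simp
  also have "\<dots> = exp (of_int (-k) * Ln (-1))" by (simp add: powr_def)
  also have "\<dots> = exp (- of_int k * (\<i> * pi))" by simp
  finally have g3: "(-1 :: complex) powi (-k) = exp (- of_int k * (\<i> * pi))" .
  show ?thesis using True g1 g2 g3 unfolding gfac_def by simp
next
  case False
  define S where "S = ((-1 :: complex) ^ m)"
  have S: "S \<noteq> 0" by (simp add: S_def)
  have e: "l - z = (-1) * (z - l)" by simp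
  have p: "(l - z) ^ m = S * (z - l) ^ m" unfolding e S_def by (rule power_mult_distrib)
  have a1: "complex_of_int ((-1)^m * k) = S * of_int k" by (simp add: S_def)
  have a2: "(-z - -l)^m = S * (z-l)^m" using p by simp
  have "gfac (-l) m ((-1)^m * k) (-z) = exp (complex_of_int ((-1)^m * k) * (fact (m - 1) / (-z - -l) ^ m))"
    unfolding gfac_def using False by (rule if_not_P)
  then have g1: "gfac (-l) m ((-1)^m * k) (-z) = exp (S * of_int k * (fact (m - 1) / (S * (z - l) ^ m)))"
    unfolding a1 a2 .
  have "S * of_int k * (fact (m - 1) / (S * (z - l) ^ m)) = of_int k * ((S * fact (m - 1)) / (S * (z - l) ^ m))"
    by simp
  also have "\<dots> = of_int k * (fact (m - 1) / (z - l) ^ m)"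
    using S by (subst mult_divide_mult_cancel_left) auto
  finally have "gfac (-l) m ((-1)^m * k) (-z) = exp (of_int k * (fact (m - 1) / (z - l) ^ m))"
    unfolding g1 by (rule arg_cong)
  moreover have "gfac l m k z = exp (of_int k * (fact (m - 1) / (z - l) ^ m))"
    unfolding gfac_def using False by (rule if_not_P)
  ultimately show ?thesis using False by simp
qed




definition negA :: "(complex \<times> nat) set \<Rightarrow> (complex \<times> nat) set" where
  "negA A = (\<lambda>(l, m). (-l, m)) ` A"

definition negc :: "(complex \<Rightarrow> nat \<Rightarrow> int) \<Rightarrow> complex \<Rightarrow> nat \<Rightarrow> int" where
  "negc c l m = (-1)^m * c (-l) m"

lemma inj_neg: "inj_on (\<lambda>(l :: complex, m :: nat). (-l, m)) A"
  by (auto simp: inj_on_def)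

lemma finite_negA: "finite A \<Longrightarrow> finite (negA A)"
  by (simp add: negA_def)

lemma fst_negA: "fst ` negA A = uminus ` fst ` A"
  by (force simp: negA_def image_iff)

lemma Nstar_form:
  assumes hN: "\<forall>u>0. N u = (\<Sum>(l, m)\<in>A. of_int (c l m) * (complex_of_real u) powr l
                                         * (complex_of_real (ln u)) ^ m)"
  shows "\<forall>u>0. Nstar N u = (\<Sum>(l, m)\<in>negA A. of_int (negc c l m) * (complex_of_real u) powr l
                                         * (complex_of_real (ln u)) ^ m)"
proof (intro allI impI)
  fix u :: real assume u: "u > 0"
  have "Nstar N u = (\<Sum>(l, m)\<in>A. of_int (c l m) * (complex_of_real (1/u)) powr l
                                         * (complex_of_real (ln (1/u))) ^ m)"
    using hN u by (simp add: Nstar_def)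
  also have "\<dots> = (\<Sum>(l, m)\<in>A. of_int (negc c (-l) m) * (complex_of_real u) powr (-l)
                                         * (complex_of_real (ln u)) ^ m)"
  proof (rule sum.cong[OF refl])
    fix p assume "p \<in> A"
    obtain l m where p: "p = (l, m)" by (cases p)
    have "complex_of_real (1/u) powr l = exp (l * of_real (ln (1/u)))"
      by (rule powr_real_exp) (use u in simp)
    also have "ln (1/u) = - ln u" using u by (simp add: ln_div)
    also have "exp (l * complex_of_real (- ln u)) = complex_of_real u powr (-l)"
      by (subst powr_real_exp[OF u]) simp
    finally have e1: "complex_of_real (1/u) powr l = complex_of_real u powr (-l)" .
    have e2: "complex_of_real (ln (1/u)) ^ m = (-1)^m * complex_of_real (ln u) ^ m"
    proof -
      have "ln (1/u) = - ln u" using u by (simp add: ln_div)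
      then have e: "complex_of_real (ln (1/u)) = - complex_of_real (ln u)" by (simp only: of_real_minus)
      show ?thesis unfolding e by (rule power_minus)
    qed
    show "(case p of (l, m) \<Rightarrow> of_int (c l m) * complex_of_real (1/u) powr l * complex_of_real (ln (1/u)) ^ m) =
          (case p of (l, m) \<Rightarrow> of_int (negc c (-l) m) * complex_of_real u powr (-l) * complex_of_real (ln u) ^ m)"
      unfolding p using e1 e2 by (simp add: negc_def)
  qed
  also have "\<dots> = (\<Sum>(l, m)\<in>negA A. of_int (negc c l m) * (complex_of_real u) powr l
                                         * (complex_of_real (ln u)) ^ m)"
    unfolding negA_def by (subst sum.reindex[OF inj_neg]) (simp add: case_prod_unfold o_def)
  finally show "Nstar N u = (\<Sum>(l, m)\<in>negA A. of_int (negc c l m) * (complex_of_real u) powr l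
                                         * (complex_of_real (ln u)) ^ m)" .
qed

definition Kc :: "(complex \<times> nat) set \<Rightarrow> (complex \<Rightarrow> nat \<Rightarrow> int) \<Rightarrow> int" where
  "Kc A c = (\<Sum>(l, m)\<in>A. if m = 0 then c l m else 0)"

lemma N_one:
  assumes hN: "\<forall>u>0. N u = (\<Sum>(l, m)\<in>A. of_int (c l m) * (complex_of_real u) powr l
                                         * (complex_of_real (ln u)) ^ m)"
  shows "N 1 = of_int (Kc A c)"
  using hN unfolding Kc_def by (simp add: case_prod_unfold power_0_left if_distrib cong: if_cong)

lemma GF_neg:
  assumes A: "finite A" and z: "z \<notin> fst ` A"
  shows "GF (negA A) (negc c) (-z) = exp (- of_int (Kc A c) * (\<i> * pi)) * GF A c z"
proof -
  have "GF (negA A) (negc c) (-z) = (\<Prod>(l, m)\<in>A. gfac (-l) m ((-1)^m * c l m) (-z))"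
    unfolding GF_def negA_def by (subst prod.reindex[OF inj_neg]) (simp add: case_prod_unfold o_def negc_def)
  also have "\<dots> = (\<Prod>(l, m)\<in>A. (if m = 0 then exp (- of_int (c l m) * (\<i> * pi)) else 1) * gfac l m (c l m) z)"
  proof (rule prod.cong[OF refl])
    fix p assume "p \<in> A"
    obtain l m where p: "p = (l, m)" by (cases p)
    have "z \<noteq> l" using z \<open>p \<in> A\<close> p by force
    then show "(case p of (l, m) \<Rightarrow> gfac (-l) m ((-1)^m * c l m) (-z)) =
       (case p of (l, m) \<Rightarrow> (if m = 0 then exp (- of_int (c l m) * (\<i> * pi)) else 1) * gfac l m (c l m) z)"
      unfolding p by (simp add: gfac_neg)
  qed
  also have "\<dots> = (\<Prod>(l, m)\<in>A. (if m = 0 then exp (- of_int (c l m) * (\<i> * pi)) else 1)) * GF A c z"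
    unfolding GF_def by (simp add: prod.distrib case_prod_unfold)
  also have "(\<Prod>(l, m)\<in>A. (if m = 0 then exp (- of_int (c l m) * (\<i> * pi)) else 1)) =
       exp (\<Sum>(l, m)\<in>A. (if m = 0 then - of_int (c l m) * (\<i> * pi) else 0))"
    by (subst exp_sum[OF A]) (simp add: case_prod_unfold if_distrib cong: if_cong)
  also have "(\<Sum>(l, m)\<in>A. (if m = 0 then - of_int (c l m) * (\<i> * pi) else 0)) = - of_int (Kc A c) * (\<i> * pi)"
  proof -
    have "\<And>p. (case p of (l, m) \<Rightarrow> if m = 0 then - of_int (c l m) * (\<i> * pi) else 0) =
        - (of_int (case p of (l, m) \<Rightarrow> if m = 0 then c l m else 0) * (\<i> * pi))"
      by (auto split: prod.split)
    then have "(\<Sum>(l, m)\<in>A. (if m = 0 then - of_int (c l m) * (\<i> * pi) else 0)) =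
        (\<Sum>p\<in>A. - (of_int (case p of (l, m) \<Rightarrow> if m = 0 then c l m else 0) * (\<i> * pi)))"
      by (intro sum.cong) auto
    also have "\<dots> = - (of_int (Kc A c) * (\<i> * pi))"
      unfolding Kc_def by (simp add: sum_negf sum_distrib_right[symmetric] of_int_sum)
    finally show ?thesis by simp
  qed
  finally show ?thesis .
qed

lemma exp_neg_int_pi: "exp (- of_int K * (\<i> * pi)) = exp (of_int K * (\<i> * pi))"
proof -
  have "exp (of_int K * (\<i> * pi)) = exp (- of_int K * (\<i> * pi))"
    by (subst exp_eq) (rule exI[of _ K], simp add: algebra_simps)
  then show ?thesis by simp
qed

lemma minus_one_powr_int: "(-1 :: complex) powr (of_int K) = exp (of_int K * (\<i> * pi))"
  by (simp add: powr_def)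




lemma halfplane_cond:
  assumes A: "finite A" and s: "Max (insert 0 (Re ` fst ` A)) < Re s"
  shows "\<forall>(l,m)\<in>A. Re l < Re s"
proof (intro ballI, clarify)
  fix l m assume "(l, m) \<in> A"
  then have "Re l \<in> insert 0 (Re ` fst ` A)" by force
  then have "Re l \<le> Max (insert 0 (Re ` fst ` A))" using A by (intro Max_ge) auto
  then show "Re l < Re s" using s by linarith
qed

lemma no_limpt_closed: "(\<forall>z. \<not> z islimpt S) \<Longrightarrow> closed S"
  by (auto simp: closed_limpt)

lemma cont_unique:
  assumes C: "continuation_isolated f S g" and B: "finite B"
    and G: "G holomorphic_on (- B)" and eq: "\<exists>\<sigma>::real. \<forall>s. \<sigma> < Re s \<longrightarrow> f s = G s"
    and z: "z \<notin> S" "z \<notin> B"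
  shows "g z = G z"
proof -
  from C have nl: "\<forall>z. \<not> z islimpt S" and hol: "g holomorphic_on (- S)"
    and \<sigma>1: "\<exists>\<sigma>::real. \<forall>s. \<sigma> < Re s \<longrightarrow> g s = f s"
    unfolding continuation_isolated_def by auto
  obtain \<sigma>1 where \<sigma>1: "\<And>s. \<sigma>1 < Re s \<Longrightarrow> g s = f s" using \<sigma>1 by blast
  obtain \<sigma>2 where \<sigma>2: "\<And>s. \<sigma>2 < Re s \<Longrightarrow> f s = G s" using eq by blast
  have cS: "countable S" using nl by (intro no_limpt_imp_countable) auto
  have cT: "countable (S \<union> B)" using cS B by (simp add: countable_finite)
  define Om where "Om = UNIV - (S \<union> B)"
  have oOm: "open Om" unfolding Om_def
    by (rule open_Diff[OF open_UNIV closed_Un[OF no_limpt_closed[OF nl] finite_imp_closed[OF B]]])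
  have cOm: "connected Om" unfolding Om_def
    by (rule connected_open_diff_countable) (use cT in auto)
  define U where "U = {s. Re s > max \<sigma>1 \<sigma>2} \<inter> Om"
  have oU: "open U" unfolding U_def by (intro open_Int oOm open_halfspace_Re_gt)
  have "U \<noteq> {}"
  proof
    assume "U = {}"
    then have "{s. Re s > max \<sigma>1 \<sigma>2} \<subseteq> S \<union> B" by (auto simp: U_def Om_def)
    then have "countable {s. Re s > max \<sigma>1 \<sigma>2}" using cT countable_subset by blast
    then show False using uncountable_halfspace_Re_gt by blast
  qed
  then obtain \<xi> where \<xi>: "\<xi> \<in> U" by blast
  have "(\<lambda>z. g z - G z) z = 0"
  proof (rule analytic_continuation[where S=Om and U=U and \<xi>=\<xi> and f="\<lambda>z. g z - G z"])
    show "(\<lambda>z. g z - G z) holomorphic_on Om"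
      by (intro holomorphic_on_diff) (use hol G in \<open>auto simp: Om_def elim!: holomorphic_on_subset\<close>)
    show "open Om" "connected Om" by fact+
    show "U \<subseteq> Om" by (auto simp: U_def)
    show "\<xi> \<in> Om" using \<xi> by (auto simp: U_def)
    show "\<xi> islimpt U" by (rule open_imp_islimpt[OF oU \<xi>])
    show "z \<in> Om" using z by (auto simp: Om_def)
    fix x assume "x \<in> U"
    then show "g x - G x = 0" using \<sigma>1 \<sigma>2 by (auto simp: U_def)
  qed
  then show ?thesis by simp
qed




theorem proposition3p10:
  fixes A :: "(complex \<times> nat) set" and c :: "complex \<Rightarrow> nat \<Rightarrow> int"
    and N :: "real \<Rightarrow> complex"
  assumes "finite A"
    and "\<forall>u>0. N u = (\<Sum>(l, m)\<in>A. of_int (c l m) * (complex_of_real u) powr l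
                                         * (complex_of_real (ln u)) ^ m)"
  shows "(\<exists>S g. continuation_isolated (zetaN N) S g) \<and>
         (\<forall>S g S' g'. continuation_isolated (zetaN N) S g \<longrightarrow>
            continuation_isolated (zetaN (Nstar N)) S' g' \<longrightarrow>
            (\<forall>s. s \<notin> S \<and> - s \<notin> S' \<longrightarrow>
               g' (- s) = g s * (-1) powr (N 1) \<and>
               (g s \<noteq> 0 \<longrightarrow> g' (- s) / g s = (-1) powr (N 1))))"
proof -
  note A = assms(1) and hN = assms(2)
  have hN': "\<forall>u>0. Nstar N u = (\<Sum>(l, m)\<in>negA A. of_int (negc c l m) * (complex_of_real u) powr l
                                         * (complex_of_real (ln u)) ^ m)"
    by (rule Nstar_form[OF hN])
  have A': "finite (negA A)" using A by (rule finite_negA)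
  have eq1: "\<exists>\<sigma>::real. \<forall>s. \<sigma> < Re s \<longrightarrow> zetaN N s = GF A c s"
    using zeta_GF[OF hN A] halfplane_cond[OF A] by blast
  have eq2: "\<exists>\<sigma>::real. \<forall>s. \<sigma> < Re s \<longrightarrow> zetaN (Nstar N) s = GF (negA A) (negc c) s"
    using zeta_GF[OF hN' A'] halfplane_cond[OF A'] by blast
  have part1: "continuation_isolated (zetaN N) (fst ` A) (GF A c)"
    unfolding continuation_isolated_def
  proof (intro conjI allI)
    show "\<not> z islimpt fst ` A" for z using A by (intro islimpt_finite) auto
    show "GF A c holomorphic_on - fst ` A" by (rule GF_holo)
    show "\<exists>\<sigma>::real. \<forall>s. \<sigma> < Re s \<longrightarrow> GF A c s = zetaN N s" using eq1 by metis
  qed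
  define K where "K = (-1 :: complex) powr (N 1)"
  have K: "K = exp (- of_int (Kc A c) * (\<i> * pi))"
    unfolding K_def N_one[OF hN] minus_one_powr_int exp_neg_int_pi ..
  have part2: "g' (- s) = g s * K"
    if C: "continuation_isolated (zetaN N) S g" and C': "continuation_isolated (zetaN (Nstar N)) S' g'"
      and s: "s \<notin> S" "- s \<notin> S'" for S g S' g' s
  proof -
    from C have nl: "\<forall>z. \<not> z islimpt S" and hol: "g holomorphic_on (- S)"
      unfolding continuation_isolated_def by auto
    from C' have nl': "\<forall>z. \<not> z islimpt S'" and hol': "g' holomorphic_on (- S')"
      unfolding continuation_isolated_def by auto
    have g_eq: "g z = GF A c z" if "z \<notin> S" "z \<notin> fst ` A" for z
      by (rule cont_unique[OF C _ GF_holo eq1 that]) (use A in auto)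
    have g'_eq: "g' z = GF (negA A) (negc c) z" if "z \<notin> S'" "z \<notin> fst ` negA A" for z
      by (rule cont_unique[OF C' _ GF_holo eq2 that]) (use A' in auto)
    define T where "T = S \<union> uminus ` S'"
    define Om where "Om = UNIV - T"
    have cS: "countable S" using nl by (intro no_limpt_imp_countable) auto
    have cS': "countable S'" using nl' by (intro no_limpt_imp_countable) auto
    have cT: "countable T" unfolding T_def using cS cS' by auto
    have clT: "closed T" unfolding T_def
      by (intro closed_Un no_limpt_closed[OF nl] closed_negations no_limpt_closed[OF nl'])
    have oOm: "open Om" unfolding Om_def by (rule open_Diff[OF open_UNIV clT])
    have cOm: "connected Om" unfolding Om_def
      by (rule connected_open_diff_countable) (use cT in auto)
    have memOm: "z \<in> Om \<longleftrightarrow> z \<notin> S \<and> - z \<notin> S'" for z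
      unfolding Om_def T_def by (auto simp: image_iff)
    define U where "U = Om - fst ` A"
    have "(\<lambda>z. g' (- z) - g z * K) s = 0"
    proof (rule analytic_continuation[where S=Om and U=U and \<xi>=s and f="\<lambda>z. g' (- z) - g z * K"])
      have h1: "(\<lambda>z. g' (- z)) holomorphic_on Om"
      proof -
        have "(g' \<circ> uminus) holomorphic_on Om"
          by (rule holomorphic_on_compose) (auto intro!: holomorphic_intros holomorphic_on_subset[OF hol'] simp: memOm)
        then show ?thesis by (simp add: o_def)
      qed
      have h2: "g holomorphic_on Om" by (rule holomorphic_on_subset[OF hol]) (auto simp: memOm)
      show "(\<lambda>z. g' (- z) - g z * K) holomorphic_on Om"
        by (intro holomorphic_on_diff holomorphic_on_mult h1 h2 holomorphic_on_const)
      show "open Om" "connected Om" by fact+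
      show "U \<subseteq> Om" by (auto simp: U_def)
      show "s \<in> Om" using s by (simp add: memOm)
      show "s \<in> Om" using s by (simp add: memOm)
      have "s islimpt Om" by (rule open_imp_islimpt[OF oOm]) (use s in \<open>simp add: memOm\<close>)
      then have "s islimpt (fst ` A \<union> U)" by (rule islimpt_subset) (auto simp: U_def)
      then show "s islimpt U" using A by (simp add: islimpt_Un_finite)
      fix z assume z: "z \<in> U"
      then have z1: "z \<notin> S" "- z \<notin> S'" "z \<notin> fst ` A" by (auto simp: U_def memOm)
      have z2: "- z \<notin> fst ` negA A"
      proof
        assume "- z \<in> fst ` negA A"
        then have "- z \<in> uminus ` fst ` A" by (simp add: fst_negA)
        then obtain y where "y \<in> fst ` A" "- z = - y" by blast
        then show False using z1(3) by simp
      qed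
      have "g' (- z) = GF (negA A) (negc c) (- z)" using g'_eq z1 z2 by blast
      also have "\<dots> = K * GF A c z" using GF_neg[OF A z1(3)] K by simp
      also have "\<dots> = K * g z" using g_eq z1 by simp
      finally show "g' (- z) - g z * K = 0" by simp
    qed
    then show ?thesis by simp
  qed
  show ?thesis
  proof (intro conjI allI impI)
    show "\<exists>S g. continuation_isolated (zetaN N) S g" using part1 by blast
    fix S g S' g' s
    assume C: "continuation_isolated (zetaN N) S g" and C': "continuation_isolated (zetaN (Nstar N)) S' g'"
      and s: "s \<notin> S \<and> - s \<notin> S'"
    show "g' (- s) = g s * (-1) powr (N 1)"
      using part2[OF C C'] s by (simp add: K_def)
    assume "g s \<noteq> 0"
    then show "g' (- s) / g s = (-1) powr (N 1)"
      using part2[OF C C'] s by (simp add: K_def)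
  qed
qed


end
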